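(* Fix a real number $c \ge 1$. For positive integers $n$ with $cn$ an integer, put $p=n$ and $q=cn$, and let $B_{p,q}$ be the random variable with $$\mathbb{P}(B_{p,q}=k) = \frac{\binom{q}{k}\binom{p+k}{k}}{\sum_{j=0}^{q}\binom{q}{j}\binom{p+j}{j}}, \qquad k=0,1,\dots,q.$$ Set $$m_{p,q} = \frac{q-p+\sqrt{p^2+6pq+q^2}}{4}, \qquad s_{p,q}^2 = \frac{q-p}{8}+\frac{(p+q)^2}{8\sqrt{p^2+6pq+q^2}}.$$ Then, as $n\to\infty$, $(B_{p,q}-m_{p,q})/s_{p,q}$ converges in distribution to a standard normal random variable. *)

theory Defs
  imports "HOL-Probability.Probability"
begin

definition B_weight :: "nat \<Rightarrow> nat \<Rightarrow> nat \<Rightarrow> real" where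
  "B_weight p q k = real (q choose k) * real ((p + k) choose k)"

definition B_pmf :: "nat \<Rightarrow> nat \<Rightarrow> nat pmf" where
  "B_pmf p q = embed_pmf (\<lambda>k. if k \<le> q then B_weight p q k / (\<Sum>j\<le>q. B_weight p q j) else 0)"

definition m_pq :: "real \<Rightarrow> real \<Rightarrow> real" where
  "m_pq p q = (q - p + sqrt (p^2 + 6*p*q + q^2)) / 4"

definition s2_pq :: "real \<Rightarrow> real \<Rightarrow> real" where
  "s2_pq p q = (q - p) / 8 + (p + q)^2 / (8 * sqrt (p^2 + 6*p*q + q^2))"

definition normalized_B :: "real \<Rightarrow> nat \<Rightarrow> real measure" where
  "normalized_B c n = (let p = n; q = nat \<lfloor>c * real n\<rfloor> in
     distr (measure_pmf (B_pmf p q)) borel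
       (\<lambda>k. (real k - m_pq (real p) (real q)) / sqrt (s2_pq (real p) (real q))))"

end

theory Submission
  imports Defs
begin


definition gg :: "real \<Rightarrow> real" where "gg t = exp (- (t^2) / 2)"

lemma gg_cont: "continuous_on S gg"
  unfolding gg_def by (auto intro!: continuous_intros)

lemma gg_int: "gg integrable_on {a..b}"
  by (intro integrable_continuous_real gg_cont)

lemma gg_pos: "0 < gg t" unfolding gg_def by simp
lemma gg_le1: "gg t \<le> 1" unfolding gg_def by simp

lemma gg_lip: "\<bar>gg t - gg u\<bar> \<le> \<bar>t - u\<bar>"
proof -
  have D: "\<And>x. DERIV gg x :> (- x * gg x)"
    unfolding gg_def by (auto intro!: derivative_eq_intros simp: algebra_simps)
  have bd: "\<bar>- x * gg x\<bar> \<le> 1" for x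
  proof -
    have "0 \<le> (\<bar>x\<bar> - 1)^2" by simp
    then have "\<bar>x\<bar> \<le> 1 + x^2/2" by (simp add: power2_eq_square algebra_simps abs_mult_self_eq)
    also have "\<dots> \<le> exp (x^2/2)" by (rule exp_ge_add_one_self)
    finally have "\<bar>x\<bar> * exp (- (x^2)/2) \<le> exp (x^2/2) * exp (- (x^2)/2)"
      by (intro mult_right_mono) auto
    also have "\<dots> = 1" by (simp add: exp_add[symmetric])
    finally show ?thesis by (simp add: gg_def abs_mult)
  qed
  have main: "\<bar>gg b - gg a\<bar> \<le> b - a" if "a < b" for a b
  proof -
    have "\<exists>z>a. z < b \<and> gg b - gg a = (b - a) * (- z * gg z)"
      by (rule MVT2[OF that, where f=gg and f'="\<lambda>x. - x * gg x"]) (use D in auto)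
    then obtain z where "a < z" "z < b" "gg b - gg a = (b - a) * (- z * gg z)" by blast
    then have "\<bar>gg b - gg a\<bar> = (b - a) * \<bar>- z * gg z\<bar>" using that by (simp add: abs_mult)
    also have "\<dots> \<le> (b - a) * 1" using bd[of z] that by (intro mult_left_mono) auto
    finally show ?thesis by simp
  qed
  show ?thesis
    by (cases "t < u"; cases "u < t") (use main[of t u] main[of u t] in auto)
qed

lemma cell_bound:
  assumes "0 \<le> h"
  shows "\<bar>integral {u..u+h} gg - h * gg u\<bar> \<le> h^2"
proof -
  have "integral {u..u+h} gg - h * gg u = integral {u..u+h} (\<lambda>t. gg t - gg u)"
    using assms by (subst integral_diff) (auto simp: gg_int)
  also have "norm \<dots> \<le> h * Henstock_Kurzweil_Integration.content (cbox u (u+h))"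
  proof (rule has_integral_bound[of h "\<lambda>t. gg t - gg u"])
    show "0 \<le> h" by fact
    show "((\<lambda>t. gg t - gg u) has_integral integral {u..u + h} (\<lambda>t. gg t - gg u)) (cbox u (u + h))"
      unfolding cbox_interval by (intro integrable_integral integrable_diff gg_int integrable_const_ivl)
    fix t assume "t \<in> cbox u (u+h)"
    then show "norm (gg t - gg u) \<le> h" using gg_lip[of t u] by (auto simp: cbox_interval)
  qed
  finally show ?thesis using assms by (simp add: power2_eq_square)
qed

lemma sum_cells:
  assumes "0 \<le> h"
  shows "\<bar>(\<Sum>i<N. h * gg (u + real i * h)) - integral {u..u + real N * h} gg\<bar> \<le> real N * h^2"
proof (induction N)
  case 0 then show ?case by simp
next
  case (Suc N)
  have comb: "integral {u..u + real N * h} gg + integral {u + real N * h..u + real (Suc N) * h} gg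
      = integral {u..u + real (Suc N) * h} gg"
  proof (rule Henstock_Kurzweil_Integration.integral_combine)
    show "u \<le> u + real N * h" using assms by simp
    show "u + real N * h \<le> u + real (Suc N) * h" using assms by (simp add: algebra_simps)
  qed (rule gg_int)
  have c: "\<bar>integral {u + real N * h..u + real N * h + h} gg - h * gg (u + real N * h)\<bar> \<le> h^2"
    by (rule cell_bound[OF assms])
  have e: "u + real (Suc N) * h = u + real N * h + h" by (simp add: algebra_simps)
  show ?case using Suc.IH c comb unfolding e by (simp add: algebra_simps)
qed


lemma gg_int_bounds:
  assumes "x \<le> y"
  shows "0 \<le> integral {x..y} gg" "integral {x..y} gg \<le> y - x"
proof -
  show "0 \<le> integral {x..y} gg"
    by (rule integral_nonneg[OF gg_int]) (simp add: gg_pos less_imp_le)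
  have "integral {x..y} gg \<le> integral {x..y} (\<lambda>_. 1::real)"
    by (rule integral_le[OF gg_int]) (auto simp: gg_le1)
  then show "integral {x..y} gg \<le> y - x" using assms by simp
qed

lemma gg_int_split:
  assumes "a \<le> c" "c \<le> b"
  shows "integral {a..b} gg = integral {a..c} gg + integral {c..b} gg"
  using Henstock_Kurzweil_Integration.integral_combine[OF assms gg_int] by simp

lemma riemann:
  fixes h a b c0 :: real
  assumes h: "0 < h" "h \<le> 1" and ab: "a \<le> b" and ac: "0 \<le> a + c0"
  shows "\<bar>h * (\<Sum>k\<in>{k::nat. a \<le> h * real k - c0 \<and> h * real k - c0 \<le> b}. gg (h * real k - c0))
           - integral {a..b} gg\<bar> \<le> h * (b - a + 3)"
proof -
  define k0 where "k0 = nat \<lceil>(a + c0) / h\<rceil>"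
  define k1 where "k1 = nat \<lfloor>(b + c0) / h\<rfloor>"
  have x0: "0 \<le> (a + c0) / h" using ac h by simp
  have y0: "0 \<le> (b + c0) / h" using ac ab h by simp
  have k0r: "real k0 = real_of_int \<lceil>(a + c0) / h\<rceil>" unfolding k0_def using x0 by simp
  have k1r: "real k1 = real_of_int \<lfloor>(b + c0) / h\<rfloor>" unfolding k1_def using y0 by simp
  have lo: "a \<le> h * real k - c0 \<longleftrightarrow> k0 \<le> k" for k
  proof -
    have "a \<le> h * real k - c0 \<longleftrightarrow> (a + c0) / h \<le> real k" using h by (simp add: field_simps)
    also have "\<dots> \<longleftrightarrow> \<lceil>(a + c0) / h\<rceil> \<le> int k" by (simp add: ceiling_le_iff)
    also have "\<dots> \<longleftrightarrow> k0 \<le> k" unfolding k0_def using x0 by linarith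
    finally show ?thesis .
  qed
  have hi: "h * real k - c0 \<le> b \<longleftrightarrow> k \<le> k1" for k
  proof -
    have "h * real k - c0 \<le> b \<longleftrightarrow> real k \<le> (b + c0) / h" using h by (simp add: field_simps)
    also have "\<dots> \<longleftrightarrow> int k \<le> \<lfloor>(b + c0) / h\<rfloor>" by (simp add: le_floor_iff)
    also have "\<dots> \<longleftrightarrow> k \<le> k1" unfolding k1_def using y0 by linarith
    finally show ?thesis .
  qed
  have S: "{k::nat. a \<le> h * real k - c0 \<and> h * real k - c0 \<le> b} = {k0..k1}"
    using lo hi by auto
  have u_lo: "a \<le> h * real k0 - c0" using lo by simp
  have u_hi: "h * real k0 - c0 < a + h"
  proof -
    have "real k0 < (a + c0) / h + 1" unfolding k0r by linarith
    then have "h * real k0 < h * ((a + c0) / h + 1)" using h by simp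
    also have "h * ((a + c0) / h + 1) = a + c0 + h" using h by (simp add: field_simps)
    finally show ?thesis by simp
  qed
  have v_hi: "h * real k1 - c0 \<le> b" using hi by simp
  have v_lo: "b < h * real k1 - c0 + h"
  proof -
    have "(b + c0) / h < real k1 + 1" unfolding k1r by linarith
    then have "h * ((b + c0) / h) < h * (real k1 + 1)" using h by (simp only: mult_strict_left_mono)
    also have "h * ((b + c0) / h) = b + c0" using h by simp
    finally show ?thesis by (simp add: algebra_simps)
  qed
  have intb: "integral {a..b} gg \<le> b - a" "0 \<le> integral {a..b} gg" using gg_int_bounds[OF ab] by auto
  show ?thesis
  proof (cases "k1 < k0")
    case True
    then have "{k0..k1} = {}" by auto
    moreover have "b - a < h"
    proof -
      have "real k1 + 1 \<le> real k0" using True by simp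
      then have "h * (real k1 + 1) \<le> h * real k0" using h by simp
      then show ?thesis using v_lo u_hi v_hi u_lo by (simp add: algebra_simps)
    qed
    moreover have "h * 1 \<le> h * (b - a + 3)" using h ab by (intro mult_left_mono) auto
    ultimately have "\<bar>h * (\<Sum>k\<in>{k0..k1}. gg (h * real k - c0)) - integral {a..b} gg\<bar> = integral {a..b} gg"
      using intb by simp
    then show ?thesis unfolding S using intb \<open>b - a < h\<close> \<open>h * 1 \<le> h * (b - a + 3)\<close> by linarith
  next
    case False
    define N where "N = k1 - k0 + 1"
    define u where "u = h * real k0 - c0"
    have SN: "{k0..k1} = (\<lambda>i. k0 + i) ` {..<N}"
    proof (intro set_eqI iffI)
      fix x assume "x \<in> {k0..k1}"
      then show "x \<in> (\<lambda>i. k0 + i) ` {..<N}" by (intro image_eqI[of _ _ "x - k0"]) (auto simp: N_def)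
    next
      fix x assume "x \<in> (\<lambda>i. k0 + i) ` {..<N}"
      then show "x \<in> {k0..k1}" using False by (auto simp: N_def)
    qed
    have sum_eq: "(\<Sum>k\<in>{k0..k1}. gg (h * real k - c0)) = (\<Sum>i<N. gg (u + real i * h))"
      unfolding SN by (subst sum.reindex) (auto simp: inj_on_def u_def algebra_simps)
    have Nr: "real N = real k1 - real k0 + 1" unfolding N_def using False by auto
    have uN: "u + real N * h = h * real k1 - c0 + h" unfolding Nr u_def by (simp add: algebra_simps)
    have cells: "\<bar>(\<Sum>i<N. h * gg (u + real i * h)) - integral {u..u + real N * h} gg\<bar> \<le> real N * h^2"
      using sum_cells[of h, where N=N and u=u] h by simp
    have Nh: "real N * h \<le> b - a + h" using uN u_lo v_hi unfolding u_def by linarith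
    have Nh2: "real N * h^2 \<le> (b - a + h) * h"
      using mult_right_mono[OF Nh, of h] h by (simp add: power2_eq_square algebra_simps)
    have "h * real k0 \<le> h * real k1" using False h by (intro mult_left_mono) auto
    then have ub: "u \<le> b" using v_hi unfolding u_def by linarith
    have s1: "integral {a..b} gg = integral {a..u} gg + integral {u..b} gg"
      by (rule gg_int_split) (use u_lo ub u_def in auto)
    have s2: "integral {u..u + real N * h} gg = integral {u..b} gg + integral {b..u + real N * h} gg"
      by (rule gg_int_split) (use ub uN v_lo in auto)
    have e1: "0 \<le> integral {a..u} gg" "integral {a..u} gg \<le> h"
      using gg_int_bounds[of a u] u_lo u_hi u_def by auto
    have e2: "0 \<le> integral {b..u + real N * h} gg" "integral {b..u + real N * h} gg \<le> h"
      using gg_int_bounds[of b "u + real N * h"] uN v_lo v_hi by auto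
    have "h * (\<Sum>k\<in>{k0..k1}. gg (h * real k - c0)) = (\<Sum>i<N. h * gg (u + real i * h))"
      unfolding sum_eq by (simp add: sum_distrib_left)
    then have "\<bar>h * (\<Sum>k\<in>{k0..k1}. gg (h * real k - c0)) - integral {a..b} gg\<bar> \<le> (b - a + h) * h + h"
      using cells Nh2 s1 s2 e1 e2 by linarith
    also have "\<dots> \<le> h * (b - a + 3)" using h ab by (simp add: algebra_simps)
    finally show ?thesis unfolding S .
  qed
qed


lemma telescope_abs:
  fixes F :: "nat \<Rightarrow> real"
  assumes "k' \<le> k" "\<And>j. k' \<le> j \<Longrightarrow> j < k \<Longrightarrow> \<bar>F (Suc j) - F j\<bar> \<le> e"
  shows "\<bar>F k - F k'\<bar> \<le> real (k - k') * e"
  using assms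
proof (induction k rule: dec_induct)
  case base then show ?case by simp
next
  case (step n)
  have "\<bar>F (Suc n) - F n\<bar> \<le> e" using step by simp
  moreover have "\<bar>F n - F k'\<bar> \<le> real (n - k') * e" using step by simp
  moreover have "real (Suc n - k') = real (n - k') + 1" using step by simp
  ultimately show ?case by (simp add: algebra_simps)
qed

lemma telescope_le:
  fixes F :: "nat \<Rightarrow> real"
  assumes "k' \<le> k" "\<And>j. k' \<le> j \<Longrightarrow> j < k \<Longrightarrow> F (Suc j) - F j \<le> - d"
  shows "F k \<le> F k' - real (k - k') * d"
  using assms
proof (induction k rule: dec_induct)
  case base then show ?case by simp
next
  case (step n)
  have "F (Suc n) - F n \<le> - d" using step by simp
  moreover have "F n \<le> F k' - real (n - k') * d" using step by simp
  moreover have "real (Suc n - k') = real (n - k') + 1" using step by simp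
  ultimately show ?case by (simp add: algebra_simps)
qed

lemma geom_le:
  fixes r :: real
  assumes "0 \<le> r" "r < 1"
  shows "(\<Sum>i\<le>n. r^i) \<le> 1 / (1 - r)"
proof -
  have "(\<Sum>i\<le>n. r^i) = (1 - r^Suc n) / (1 - r)" using sum_gp0[of r n] assms by simp
  also have "\<dots> \<le> 1 / (1 - r)" using assms by (intro divide_right_mono) auto
  finally show ?thesis .
qed

lemma geom_shift:
  fixes r :: real
  assumes "0 \<le> r" "r < 1" "a \<le> b"
  shows "(\<Sum>k\<in>{a..b}. r^(k - a)) \<le> 1 / (1 - r)"
proof -
  have "(\<Sum>k\<in>{a..b}. r^(k - a)) = (\<Sum>k\<in>{0+a..(b-a)+a}. r^(k - a))" using assms by simp
  also have "\<dots> = (\<Sum>i\<in>{0..b-a}. r^i)" by (subst sum.shift_bounds_cl_nat_ivl) simp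
  also have "\<dots> \<le> 1 / (1 - r)" using geom_le[OF assms(1,2), of "b-a"] by (simp add: atLeast0AtMost)
  finally show ?thesis .
qed

lemma geom_rev:
  fixes r :: real
  assumes "0 \<le> r" "r < 1"
  shows "(\<Sum>k\<in>{..b}. r^(b - k)) \<le> 1 / (1 - r)"
proof -
  have "(\<Sum>k\<in>{..b}. r^(b - k)) = (\<Sum>i\<in>{..b}. r^i)"
    by (rule sum.reindex_bij_witness[where i="\<lambda>i. b - i" and j="\<lambda>i. b - i"]) auto
  also have "\<dots> \<le> 1 / (1 - r)" by (rule geom_le[OF assms])
  finally show ?thesis .
qed

lemma exp_m1_bound:
  fixes E :: real
  assumes "\<bar>E\<bar> \<le> 1/2"
  shows "\<bar>exp E - 1\<bar> \<le> 2 * \<bar>E\<bar>"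
proof -
  have "exp E \<le> 1 + 2 * \<bar>E\<bar>" using exp_bound_lemma[of E] assms by simp
  moreover have "1 + E \<le> exp E" by (rule exp_ge_add_one_self)
  ultimately show ?thesis by linarith
qed

lemma inv_one_minus_exp:
  fixes d :: real
  assumes "0 < d"
  shows "1 / (1 - exp (- d)) \<le> 1 + 1 / d"
proof -
  have "1 + d \<le> exp d" by (rule exp_ge_add_one_self)
  then have "exp (- d) \<le> 1 / (1 + d)" using assms by (simp add: exp_minus field_simps)
  then have "d / (1 + d) \<le> 1 - exp (- d)" using assms by (simp add: field_simps)
  moreover have "0 < d / (1 + d)" using assms by simp
  moreover have "0 < (1 - exp (- d)) * (d / (1 + d))"
    using calculation assms by (intro mult_pos_pos) auto
  ultimately have "1 / (1 - exp (- d)) \<le> 1 / (d / (1 + d))"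
    by (intro divide_left_mono) auto
  also have "\<dots> = 1 + 1 / d" using assms by (simp add: field_simps)
  finally show ?thesis .
qed


context
  fixes q :: nat and w :: "nat \<Rightarrow> real" and m sg K e :: real
  assumes wpos: "\<And>k. k \<le> q \<Longrightarrow> 0 < w k"
    and mono: "\<And>i j. i \<le> j \<Longrightarrow> j < q \<Longrightarrow> ln (w (Suc j)) - ln (w j) \<le> ln (w (Suc i)) - ln (w i)"
    and s1: "1 \<le> sg" and sK: "K \<le> sg" and K2: "2 \<le> K"
    and win1: "1 \<le> m - (K+2)* sg" and win2: "m + (K+2)* sg + 1 \<le> real q"
    and loc: "\<And>j::nat. \<bar>real j - m\<bar> \<le> (K+2)* sg \<Longrightarrow>
       \<bar>ln (w (Suc j)) - ln (w j) + (real j + 1/2 - m)/sg^2\<bar> \<le> e/sg"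
    and e0: "0 \<le> e" and eK: "(K+3)*e \<le> 1/2"
begin

definition "DD j = ln (w (Suc j)) - ln (w j)"
definition "FF k = ln (w k) + (real k - m)^2 / (2 * sg^2)"
definition "k0 = nat \<lfloor>m\<rfloor>"
definition "AA = exp (FF k0)"

lemma s_pos: "0 < sg" using s1 by simp
lemma K_pos: "0 < K" using K2 by simp
lemma Ks_pos: "0 \<le> K * sg" using s1 K2 by simp

lemma k0_close: "\<bar>real k0 - m\<bar> \<le> 1"
proof -
  have "0 \<le> m" using win1 s1 K2 by (smt (verit) mult_nonneg_nonneg)
  then have "real k0 = real_of_int \<lfloor>m\<rfloor>" unfolding k0_def by simp
  then show ?thesis by linarith
qed

lemma FF_step:
  assumes "\<bar>real j - m\<bar> \<le> (K+2)* sg"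
  shows "\<bar>FF (Suc j) - FF j\<bar> \<le> e/sg"
proof -
  have "FF (Suc j) - FF j = DD j + ((real j + 1 - m)^2 - (real j - m)^2) / (2 * sg^2)"
    unfolding FF_def DD_def by (simp add: diff_divide_distrib add_ac)
  also have "((real j + 1 - m)^2 - (real j - m)^2) / (2 * sg^2) = (real j + 1/2 - m)/sg^2"
    using s_pos by (simp add: power2_eq_square field_simps)
  finally show ?thesis using loc[OF assms] unfolding DD_def by simp
qed

lemma FF_close:
  assumes "\<bar>real k - m\<bar> \<le> (K+1)* sg"
  shows "\<bar>FF k - FF k0\<bar> \<le> (K+2)*e"
proof -
  have win: "\<bar>real j - m\<bar> \<le> (K+2)* sg" if "min k k0 \<le> j" "j \<le> max k k0" for j
  proof -
    have "real (min k k0) \<le> real j" "real j \<le> real (max k k0)" using that by auto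
    then show ?thesis using assms k0_close s1 by (auto simp: algebra_simps split: if_splits) 
  qed
  have dist: "real (max k k0 - min k k0) \<le> (K+2)* sg"
    using assms k0_close s1 by (auto simp: algebra_simps of_nat_diff)
  have "\<bar>FF (max k k0) - FF (min k k0)\<bar> \<le> real (max k k0 - min k k0) * (e/sg)"
    by (rule telescope_abs) (auto intro!: FF_step win)
  also have "\<dots> \<le> ((K+2)* sg) * (e/sg)" using dist e0 s_pos by (intro mult_right_mono) auto
  also have "\<dots> = (K+2)*e" using s_pos by simp
  finally show ?thesis by (cases "k \<le> k0") (auto simp: max_def min_def abs_minus_commute)
qed

lemma AA_pos: "0 < AA" unfolding AA_def by simp

lemma w_form:
  assumes "k \<le> q"
  shows "w k = AA * gg ((real k - m)/sg) * exp (FF k - FF k0)"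
proof -
  have "w k = exp (ln (w k))" using wpos[OF assms] by simp
  also have "ln (w k) = FF k0 + (- (((real k - m)/sg)^2) / 2) + (FF k - FF k0)"
    unfolding FF_def using s_pos by (simp add: power_divide field_simps)
  finally have "w k = exp (FF k0 + (- (((real k - m)/sg)^2) / 2) + (FF k - FF k0))" .
  then show ?thesis unfolding AA_def gg_def by (simp only: mult_exp_exp)
qed


lemma e_small: "e \<le> 1/10"
proof -
  have "5 * e \<le> (K+3) * e" using K2 e0 by (intro mult_right_mono) auto
  then show ?thesis using eK by simp
qed

lemma m_ge: "K * sg + 1 \<le> m" using win1 s1 K2 by (simp add: algebra_simps)

lemma E_bound:
  assumes "\<bar>real k - m\<bar> \<le> (K+1) * sg"
  shows "\<bar>exp (FF k - FF k0) - 1\<bar> \<le> 2 * ((K+2) * e)"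
proof -
  have a: "\<bar>FF k - FF k0\<bar> \<le> (K+2) * e" by (rule FF_close[OF assms])
  have "(K+2) * e \<le> (K+3) * e" using e0 by (intro mult_right_mono) auto
  then have "\<bar>FF k - FF k0\<bar> \<le> 1/2" using a eK by linarith
  then have "\<bar>exp (FF k - FF k0) - 1\<bar> \<le> 2 * \<bar>FF k - FF k0\<bar>" by (rule exp_m1_bound)
  also have "\<dots> \<le> 2 * ((K+2) * e)" using a by simp
  finally show ?thesis .
qed

lemma w_le_2A:
  assumes "k \<le> q" "\<bar>real k - m\<bar> \<le> (K+1) * sg"
  shows "w k \<le> 2 * AA"
proof -
  have "\<bar>exp (FF k - FF k0) - 1\<bar> \<le> 2 * ((K+2) * e)" by (rule E_bound[OF assms(2)])
  moreover have "(K+2) * e \<le> (K+3) * e" using e0 by (intro mult_right_mono) auto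
  ultimately have ex: "exp (FF k - FF k0) \<le> 2" using eK by linarith
  have "w k = AA * gg ((real k - m)/sg) * exp (FF k - FF k0)" by (rule w_form[OF assms(1)])
  also have "\<dots> \<le> AA * 1 * 2"
    using AA_pos gg_le1 gg_pos ex by (intro mult_mono) (auto simp: less_imp_le)
  finally show ?thesis by simp
qed

lemma central:
  assumes x: "-K \<le> x" "x \<le> K"
  shows "\<bar>(\<Sum>k\<in>{k. k \<le> q \<and> -K \<le> (real k - m)/sg \<and> (real k - m)/sg \<le> x}. w k) / (AA * sg)
          - integral {-K..x} gg\<bar> \<le> 2*(K+2)*e*(4*K+3) + (2*K+3)/sg"
proof -
  define S where "S = {k. k \<le> q \<and> -K \<le> (real k - m)/sg \<and> (real k - m)/sg \<le> x}"
  define t where "t k = (real k - m)/sg" for k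
  have tk: "t k = (1/sg) * real k - m/sg" for k unfolding t_def by (simp add: diff_divide_distrib)
  have inS: "k \<in> S \<Longrightarrow> k \<le> q \<and> \<bar>real k - m\<bar> \<le> (K+1) * sg" for k
  proof -
    assume "k \<in> S"
    then have a: "-K \<le> (real k - m)/sg" "(real k - m)/sg \<le> K" "k \<le> q" using x unfolding S_def by auto
    then have "-K * sg \<le> real k - m" "real k - m \<le> K * sg" using s_pos
      by (simp_all add: pos_le_divide_eq pos_divide_le_eq)
    then show ?thesis using a s1 by (auto simp: algebra_simps)
  qed
  have Seq: "S = {k::nat. -K \<le> (1/sg) * real k - m/sg \<and> (1/sg) * real k - m/sg \<le> x}"
  proof -
    have "k \<le> q" if "(real k - m)/sg \<le> x" for k
    proof -
      have "real k - m \<le> x * sg" using that s_pos by (simp add: pos_divide_le_eq)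
      also have "\<dots> \<le> K * sg" using x s_pos by (intro mult_right_mono) auto
      finally have "real k \<le> m + K * sg" by simp
      also have "\<dots> \<le> real q" using win2 s1 K2 by (smt (verit) mult_right_mono)
      finally show ?thesis by simp
    qed
    then show ?thesis unfolding S_def using tk[unfolded t_def] by auto
  qed
  have finS: "finite S" unfolding S_def by auto
  define R where "R = (1/sg) * (\<Sum>k\<in>S. gg (t k))"
  have riem: "\<bar>R - integral {-K..x} gg\<bar> \<le> (1/sg) * (x - (-K) + 3)"
  proof -
    have "0 \<le> -K + m/sg"
    proof -
      have "K * sg \<le> m" using m_ge by simp
      then have "K \<le> m / sg" using s_pos by (simp add: pos_le_divide_eq)
      then show ?thesis by simp
    qed
    then have "\<bar>(1/sg) * (\<Sum>k\<in>{k::nat. -K \<le> (1/sg) * real k - m/sg \<and> (1/sg) * real k - m/sg \<le> x}.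
            gg ((1/sg) * real k - m/sg)) - integral {-K..x} gg\<bar> \<le> (1/sg) * (x - (-K) + 3)"
      using s1 x by (intro riemann) auto
    then show ?thesis unfolding R_def Seq tk .
  qed
  have R0: "0 \<le> R" unfolding R_def
    by (intro mult_nonneg_nonneg sum_nonneg) (auto simp: less_imp_le gg_pos s_pos)
  have Rb: "R \<le> 4*K+3"
  proof -
    have "integral {-K..x} gg \<le> x - (-K)" using gg_int_bounds(2)[of "-K" x] x by simp
    moreover have "(1/sg) * (x - (-K) + 3) \<le> x - (-K) + 3"
      using s1 x K2 by (intro mult_left_le_one_le) auto
    ultimately show ?thesis using riem x by linarith
  qed
  have wsum: "(\<Sum>k\<in>S. w k) / (AA * sg) = (1/sg) * (\<Sum>k\<in>S. gg (t k) * exp (FF k - FF k0))"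
  proof -
    have "(\<Sum>k\<in>S. w k) = (\<Sum>k\<in>S. AA * (gg (t k) * exp (FF k - FF k0)))"
      using inS by (intro sum.cong) (auto simp: w_form t_def)
    also have "\<dots> = AA * (\<Sum>k\<in>S. gg (t k) * exp (FF k - FF k0))" by (simp add: sum_distrib_left)
    finally show ?thesis using AA_pos s_pos by simp
  qed
  have diff: "\<bar>(\<Sum>k\<in>S. w k) / (AA * sg) - R\<bar> \<le> 2*(K+2)*e * R"
  proof -
    have "(\<Sum>k\<in>S. w k) / (AA * sg) - R = (1/sg) * (\<Sum>k\<in>S. gg (t k) * (exp (FF k - FF k0) - 1))"
      unfolding wsum R_def by (simp add: sum_subtractf algebra_simps)
    also have "\<bar>\<dots>\<bar> \<le> (1/sg) * (\<Sum>k\<in>S. gg (t k) * (2*(K+2)*e))"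
    proof -
      have "\<bar>\<Sum>k\<in>S. gg (t k) * (exp (FF k - FF k0) - 1)\<bar> \<le> (\<Sum>k\<in>S. \<bar>gg (t k) * (exp (FF k - FF k0) - 1)\<bar>)"
        by (rule sum_abs)
      also have "\<dots> \<le> (\<Sum>k\<in>S. gg (t k) * (2*(K+2)*e))"
      proof (rule sum_mono)
        fix k assume "k \<in> S"
        then have "\<bar>exp (FF k - FF k0) - 1\<bar> \<le> 2 * ((K+2) * e)" using E_bound inS by blast
        then have "gg (t k) * \<bar>exp (FF k - FF k0) - 1\<bar> \<le> gg (t k) * (2 * ((K+2) * e))"
          using gg_pos[of "t k"] by (intro mult_left_mono) auto
        moreover have "\<bar>gg (t k) * (exp (FF k - FF k0) - 1)\<bar> = gg (t k) * \<bar>exp (FF k - FF k0) - 1\<bar>"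
          using gg_pos[of "t k"] by (simp add: abs_mult)
        ultimately show "\<bar>gg (t k) * (exp (FF k - FF k0) - 1)\<bar> \<le> gg (t k) * (2*(K+2)*e)"
          by (simp only: mult.assoc)
      qed
      finally show ?thesis using s_pos by (simp add: abs_mult divide_right_mono)
    qed
    also have "\<dots> = (1/sg) * ((\<Sum>k\<in>S. gg (t k)) * (2*(K+2)*e))" by (simp only: sum_distrib_right)
    also have "\<dots> = 2*(K+2)*e * R" unfolding R_def by (simp only: ac_simps)
    finally show ?thesis .
  qed
  have "2*(K+2)*e * R \<le> 2*(K+2)*e * (4*K+3)" using Rb e0 K2 by (intro mult_left_mono) auto
  moreover have "(1/sg) * (x - (-K) + 3) \<le> (2*K+3)/sg" using x s_pos by (simp add: divide_right_mono)
  ultimately show ?thesis using diff riem unfolding S_def by linarith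
qed

lemma delta_facts: "0 < K/(2* sg)" "1 / (1 - exp (- (K/(2* sg)))) \<le> 1 + 2* sg/K"
  "0 \<le> exp (- (K/(2* sg)))" "exp (- (K/(2* sg))) < 1"
proof -
  show d: "0 < K/(2* sg)" using K_pos s_pos by simp
  show "1 / (1 - exp (- (K/(2* sg)))) \<le> 1 + 2* sg/K" using inv_one_minus_exp[OF d] by simp
  show "0 \<le> exp (- (K/(2* sg)))" by simp
  show "exp (- (K/(2* sg))) < 1" using d by simp
qed

lemma tail_final:
  assumes "0 \<le> W" "W \<le> 2 * AA" "T \<le> W * (1 / (1 - exp (- (K/(2* sg)))))"
  shows "T \<le> 6 * AA * sg / K"
proof -
  have "T \<le> W * (1 + 2* sg/K)"
    using assms delta_facts(2) by (meson dual_order.trans mult_left_mono)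
  also have "\<dots> \<le> 2 * AA * (1 + 2* sg/K)" using assms(2) K_pos s_pos by (intro mult_right_mono) auto
  also have "1 + 2* sg/K \<le> 3* sg/K" using sK K_pos by (simp add: field_simps)
  then have "2 * AA * (1 + 2* sg/K) \<le> 2 * AA * (3* sg/K)" using AA_pos by (intro mult_left_mono) auto
  finally show ?thesis by simp
qed

lemma exp_telescope:
  assumes "k \<le> q" "k' \<le> q" "ln (w k) \<le> ln (w k') - real n * (K/(2* sg))"
  shows "w k \<le> w k' * exp (- (K/(2* sg))) ^ n"
proof -
  have "w k = exp (ln (w k))" using wpos assms by simp
  also have "\<dots> \<le> exp (ln (w k') - real n * (K/(2* sg)))" using assms(3) by simp
  also have "\<dots> = w k' * exp (- (K/(2* sg))) ^ n"
    using wpos[OF assms(2)] by (simp add: exp_diff exp_of_nat_mult[symmetric] exp_minus field_simps)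
  finally show ?thesis .
qed

lemma upper_tail: "(\<Sum>k\<in>{k. k \<le> q \<and> K < (real k - m)/sg}. w k) \<le> 6 * AA * sg / K"
proof -
  define \<delta> where "\<delta> = K/(2* sg)"
  define r where "r = exp (- \<delta>)"
  define k1 where "k1 = nat (\<lfloor>m + K * sg\<rfloor> + 1)"
  have "0 \<le> m + K * sg" using m_ge Ks_pos by linarith
  then have k1r: "real k1 = real_of_int \<lfloor>m + K * sg\<rfloor> + 1" unfolding k1_def by simp
  have k1a: "m + K * sg < real k1" "real k1 \<le> m + K * sg + 1" unfolding k1r by linarith+
  have k1q: "k1 < q"
  proof -
    have "real k1 < m + (K+2) * sg + 1" using k1a s_pos by (simp add: algebra_simps)
    then show ?thesis using win2 by simp
  qed
  have k1c: "\<bar>real k1 - m\<bar> \<le> (K+1) * sg" using k1a s1 Ks_pos by (simp add: algebra_simps)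
  have Dk1: "ln (w (Suc k1)) - ln (w k1) \<le> - \<delta>"
  proof -
    have c2: "\<bar>real k1 - m\<bar> \<le> (K+2) * sg" using k1c s_pos by (simp add: algebra_simps)
    have l: "ln (w (Suc k1)) - ln (w k1) \<le> - ((real k1 + 1/2 - m)/sg^2) + e/sg"
      using loc[OF c2] by linarith
    have "K * sg \<le> real k1 + 1/2 - m" using k1a by simp
    then have "(K * sg)/sg^2 \<le> (real k1 + 1/2 - m)/sg^2" by (simp add: divide_right_mono)
    moreover have "(K * sg)/sg^2 = K/sg" using s_pos by (simp add: power2_eq_square)
    ultimately have "ln (w (Suc k1)) - ln (w k1) \<le> - (K/sg) + e/sg" using l by linarith
    also have "\<dots> = (e - K)/sg" by (simp add: diff_divide_distrib)
    also have "\<dots> \<le> (- K/2)/sg" using e_small K2 s_pos by (intro divide_right_mono) auto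
    also have "\<dots> = - \<delta>" unfolding \<delta>_def by simp
    finally show ?thesis .
  qed
  have bound: "w k \<le> w k1 * r ^ (k - k1)" if "k \<in> {k1..q}" for k
  proof -
    have "ln (w k) \<le> ln (w k1) - real (k - k1) * \<delta>"
    proof (rule telescope_le[where F="\<lambda>k. ln (w k)"])
      show "k1 \<le> k" using that by simp
      fix j assume "k1 \<le> j" "j < k"
      then have "ln (w (Suc j)) - ln (w j) \<le> ln (w (Suc k1)) - ln (w k1)"
        using that by (intro mono) auto
      then show "ln (w (Suc j)) - ln (w j) \<le> - \<delta>" using Dk1 by linarith
    qed
    then show ?thesis unfolding r_def \<delta>_def using that k1q by (intro exp_telescope) auto
  qed
  have sub: "{k. k \<le> q \<and> K < (real k - m)/sg} \<subseteq> {k1..q}"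
  proof
    fix k assume "k \<in> {k. k \<le> q \<and> K < (real k - m)/sg}"
    then have a: "k \<le> q" "K < (real k - m)/sg" by auto
    then have "K * sg < real k - m" using s_pos by (simp add: pos_less_divide_eq)
    then have "real k1 < real k + 1" using k1r by linarith
    then have "k1 \<le> k" by linarith
    then show "k \<in> {k1..q}" using a by simp
  qed
  have "(\<Sum>k\<in>{k. k \<le> q \<and> K < (real k - m)/sg}. w k) \<le> (\<Sum>k\<in>{k1..q}. w k)"
    using sub wpos by (intro sum_mono2) (auto intro: less_imp_le)
  also have "\<dots> \<le> (\<Sum>k\<in>{k1..q}. w k1 * r ^ (k - k1))" using bound by (intro sum_mono) auto
  also have "\<dots> = w k1 * (\<Sum>k\<in>{k1..q}. r ^ (k - k1))" by (simp add: sum_distrib_left)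
  also have "\<dots> \<le> w k1 * (1 / (1 - r))"
    using geom_shift[of r k1 q] delta_facts k1q wpos[of k1] unfolding r_def \<delta>_def
    by (intro mult_left_mono) auto
  finally have T: "(\<Sum>k\<in>{k. k \<le> q \<and> K < (real k - m)/sg}. w k) \<le> w k1 * (1 / (1 - exp (- (K/(2* sg)))))"
    unfolding r_def \<delta>_def .
  show ?thesis
    by (rule tail_final[OF _ w_le_2A T]) (use wpos[of k1] k1q k1c in auto)
qed

lemma lower_tail: "(\<Sum>k\<in>{k. k \<le> q \<and> (real k - m)/sg < -K}. w k) \<le> 6 * AA * sg / K"
proof -
  define \<delta> where "\<delta> = K/(2* sg)"
  define r where "r = exp (- \<delta>)"
  define k2 where "k2 = nat (\<lceil>m - K * sg\<rceil> - 1)"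
  have "1 \<le> m - K * sg" using m_ge by linarith
  then have ce: "1 \<le> \<lceil>m - K * sg\<rceil>" by linarith
  then have k2r: "real k2 = real_of_int \<lceil>m - K * sg\<rceil> - 1" unfolding k2_def by simp
  have k2a: "real k2 < m - K * sg" "m - K * sg - 1 \<le> real k2" unfolding k2r by linarith+
  have k2q: "k2 < q"
  proof -
    have "real k2 < real q" using k2a win2 Ks_pos s_pos by (simp add: algebra_simps)
    then show ?thesis by simp
  qed
  have k2c: "\<bar>real k2 - m\<bar> \<le> (K+1) * sg" using k2a s1 Ks_pos by (simp add: algebra_simps)
  have Dk2: "\<delta> \<le> ln (w (Suc k2)) - ln (w k2)"
  proof -
    have c2: "\<bar>real k2 - m\<bar> \<le> (K+2) * sg" using k2c s_pos by (simp add: algebra_simps)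
    have l: "(m - real k2 - 1/2)/sg^2 - e/sg \<le> ln (w (Suc k2)) - ln (w k2)"
    proof -
      have "(m - real k2 - 1/2)/sg^2 = (- (real k2 + 1/2 - m))/sg^2" by (simp add: algebra_simps)
      also have "\<dots> = - ((real k2 + 1/2 - m)/sg^2)" by (rule minus_divide_left[symmetric])
      finally have "(m - real k2 - 1/2)/sg^2 = - ((real k2 + 1/2 - m)/sg^2)" .
      then show ?thesis using loc[OF c2] by linarith
    qed
    have "(K - 1/2) * sg \<le> m - real k2 - 1/2" using k2a s1 by (simp add: algebra_simps)
    then have "((K - 1/2) * sg)/sg^2 \<le> (m - real k2 - 1/2)/sg^2" by (simp add: divide_right_mono)
    moreover have "((K - 1/2) * sg)/sg^2 = (K - 1/2)/sg" using s_pos by (simp add: power2_eq_square)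
    ultimately have "(K - 1/2)/sg - e/sg \<le> ln (w (Suc k2)) - ln (w k2)" using l by linarith
    moreover have "(K - 1/2)/sg - e/sg = (K - 1/2 - e)/sg" by (simp add: diff_divide_distrib)
    moreover have "(K/2)/sg \<le> (K - 1/2 - e)/sg" using e_small K2 s_pos by (intro divide_right_mono) auto
    ultimately show ?thesis unfolding \<delta>_def by simp
  qed
  have bound: "w k \<le> w k2 * r ^ (k2 - k)" if "k \<in> {..k2}" for k
  proof -
    have "- ln (w k2) \<le> - ln (w k) - real (k2 - k) * \<delta>"
    proof (rule telescope_le[where F="\<lambda>k. - ln (w k)"])
      show "k \<le> k2" using that by simp
      fix j assume "k \<le> j" "j < k2"
      then have "ln (w (Suc k2)) - ln (w k2) \<le> ln (w (Suc j)) - ln (w j)"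
        using k2q by (intro mono) auto
      then show "- ln (w (Suc j)) - - ln (w j) \<le> - \<delta>" using Dk2 by linarith
    qed
    then have "ln (w k) \<le> ln (w k2) - real (k2 - k) * \<delta>" by linarith
    then show ?thesis unfolding r_def \<delta>_def using that k2q by (intro exp_telescope) auto
  qed
  have sub: "{k. k \<le> q \<and> (real k - m)/sg < -K} \<subseteq> {..k2}"
  proof
    fix k assume "k \<in> {k. k \<le> q \<and> (real k - m)/sg < -K}"
    then have a: "(real k - m)/sg < -K" by auto
    then have "real k - m < -K * sg" using s_pos by (simp add: pos_divide_less_eq)
    then have "real k < real k2 + 1" using k2r by linarith
    then have "k \<le> k2" by linarith
    then show "k \<in> {..k2}" by simp
  qed
  have "(\<Sum>k\<in>{k. k \<le> q \<and> (real k - m)/sg < -K}. w k) \<le> (\<Sum>k\<in>{..k2}. w k)"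
    using sub wpos k2q by (intro sum_mono2) (auto intro: less_imp_le)
  also have "\<dots> \<le> (\<Sum>k\<in>{..k2}. w k2 * r ^ (k2 - k))" using bound by (intro sum_mono) auto
  also have "\<dots> = w k2 * (\<Sum>k\<in>{..k2}. r ^ (k2 - k))" by (simp add: sum_distrib_left)
  also have "\<dots> \<le> w k2 * (1 / (1 - r))"
    using geom_rev[of r k2] delta_facts k2q wpos[of k2] unfolding r_def \<delta>_def
    by (intro mult_left_mono) auto
  finally have T: "(\<Sum>k\<in>{k. k \<le> q \<and> (real k - m)/sg < -K}. w k) \<le> w k2 * (1 / (1 - exp (- (K/(2* sg)))))"
    unfolding r_def \<delta>_def .
  show ?thesis
    by (rule tail_final[OF _ w_le_2A T]) (use wpos[of k2] k2q k2c in auto)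
qed

end


abbreviation "NN \<equiv> std_normal_distribution"

lemma NN_prob: "prob_space NN"
  using real_dist_normal_dist unfolding real_distribution_def by blast

lemma NN_sets[simp]: "sets NN = sets borel" by (simp add: sets_density)
lemma NN_space[simp]: "space NN = UNIV" by (simp add: space_density)

lemma NN_interval:
  assumes "a \<le> b"
  shows "measure NN {a..b} = integral {a..b} gg / sqrt (2 * pi)"
proof -
  let ?f = "std_normal_density"
  have fi: "?f integrable_on {a..b}"
    unfolding std_normal_density_def by (intro integrable_continuous_real) (auto intro!: continuous_intros)
  have eqf: "?f = (\<lambda>y. gg y / sqrt (2 * pi))"
    by (rule ext) (simp add: std_normal_density_def gg_def)
  have I: "integral {a..b} ?f = integral {a..b} gg / sqrt (2 * pi)"
    unfolding eqf using integral_mult[OF gg_int, of "1 / sqrt (2*pi)" a b] by simp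
  have "((\<lambda>y. if y \<in> {a..b} then ?f y else 0) has_integral integral {a..b} ?f) UNIV"
    using has_integral_restrict_UNIV[of "{a..b}" ?f] fi by (simp add: integrable_integral)
  moreover have "(\<lambda>y. if y \<in> {a..b} then ?f y else 0) = (\<lambda>y. ?f y * indicator {a..b} y)"
    by (rule ext) (simp add: indicator_def)
  ultimately have hi: "((\<lambda>y. ?f y * indicator {a..b} y) has_integral integral {a..b} ?f) UNIV" by simp
  have "emeasure NN {a..b} = (\<integral>\<^sup>+ y. ennreal (?f y) * indicator {a..b} y \<partial>lborel)"
    by (subst emeasure_density) auto
  also have "\<dots> = (\<integral>\<^sup>+ y. ennreal (?f y * indicator {a..b} y) \<partial>lborel)"
    by (intro nn_integral_cong) (simp add: indicator_def)
  also have "\<dots> = ennreal (integral {a..b} ?f)"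
    by (rule nn_integral_has_integral_lborel[OF _ _ hi]) (auto simp: indicator_def)
  finally have "measure NN {a..b} = integral {a..b} ?f"
    unfolding measure_def using integral_nonneg[OF fi] by (simp add: indicator_def)
  then show ?thesis using I by simp
qed

lemma NN_lim: "(\<lambda>n. measure NN {- real n..real n}) \<longlonglongrightarrow> 1"
proof -
  interpret prob_space NN by (rule NN_prob)
  have "(\<lambda>n. measure NN {- real n..real n}) \<longlonglongrightarrow> measure NN (\<Union>n. {- real n..real n})"
    by (rule finite_Lim_measure_incseq) (auto simp: incseq_def)
  moreover have "(\<Union>n. {- real n..real n}) = UNIV"
  proof -
    have "x \<in> {- real (nat \<lceil>\<bar>x\<bar>\<rceil>)..real (nat \<lceil>\<bar>x\<bar>\<rceil>)}" for x :: real by auto linarith+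
    then show ?thesis by blast
  qed
  ultimately show ?thesis using prob_space by simp
qed

lemma NN_tail:
  assumes "-K \<le> x" "x \<le> K"
  shows "measure NN {..x} - measure NN {-K..x} \<le> 1 - measure NN {-K..K}"
    "measure NN {-K..x} \<le> measure NN {..x}"
proof -
  interpret prob_space NN by (rule NN_prob)
  have "measure NN {..x} = measure NN ({..<-K} \<union> {-K..x})"
    using assms by (intro arg_cong[where f="measure NN"]) auto
  also have "\<dots> = measure NN {..<-K} + measure NN {-K..x}" by (rule finite_measure_Union) auto
  finally have a: "measure NN {..x} = measure NN {..<-K} + measure NN {-K..x}" .
  have "measure NN {..<-K} + measure NN {-K..K} = measure NN ({..<-K} \<union> {-K..K})"
    by (rule finite_measure_Union[symmetric]) auto
  also have "\<dots> \<le> 1" by (rule prob_le_1)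
  finally show "measure NN {..x} - measure NN {-K..x} \<le> 1 - measure NN {-K..K}" using a by simp
  show "measure NN {-K..x} \<le> measure NN {..x}" by (rule finite_measure_mono) auto
qed

lemma final_arith:
  fixes L P num den Gx GK e :: real
  assumes L: "2 \<le> L" "L \<le> 3" and P: "0 \<le> P" "P \<le> 1" and e: "0 < e" "e \<le> 1/10"
    and n: "\<bar>num - Gx\<bar> \<le> 3 * e" and d: "\<bar>den - GK\<bar> \<le> 4 * e"
    and gx: "L * (P - e) \<le> Gx" "Gx \<le> L * P" and gk: "L * (1 - e) \<le> GK" "GK \<le> L"
  shows "\<bar>num / den - P\<bar> \<le> 10 * e"
proof -
  have "L * e \<le> 3 * e" using L e by (intro mult_right_mono) auto
  have "L * (1 - e) \<ge> 2 * (1 - e)" using L e by (intro mult_right_mono) auto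
  then have "2 * (1 - e) \<le> GK" using gk by linarith
  then have "2 - 2 * e \<le> GK" by simp
  then have den: "7/5 \<le> den" using d e by linarith
  have a1: "\<bar>Gx - L * P\<bar> \<le> L * e" using gx by (simp add: algebra_simps)
  have a2: "\<bar>P * (L - GK)\<bar> \<le> L * e"
  proof -
    have "\<bar>P * (L - GK)\<bar> = P * \<bar>L - GK\<bar>" using P by (simp add: abs_mult)
    also have "\<dots> \<le> 1 * \<bar>L - GK\<bar>" using P by (intro mult_right_mono) auto
    also have "\<bar>L - GK\<bar> \<le> L * e" using gk by (simp add: algebra_simps)
    finally show ?thesis by simp
  qed
  have a3: "\<bar>P * (GK - den)\<bar> \<le> 4 * e"
  proof -
    have "\<bar>P * (GK - den)\<bar> = P * \<bar>GK - den\<bar>" using P by (simp add: abs_mult)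
    also have "\<dots> \<le> 1 * \<bar>GK - den\<bar>" using P by (intro mult_right_mono) auto
    finally show ?thesis using d by simp
  qed
  have "num - P * den = (num - Gx) + (Gx - L * P) + P * (L - GK) + P * (GK - den)"
    by (simp add: algebra_simps)
  then have b: "\<bar>num - P * den\<bar> \<le> 13 * e" using n a1 a2 a3 \<open>L * e \<le> 3 * e\<close> by linarith
  have "num / den - P = (num - P * den) / den" using den by (simp add: field_simps)
  then have "\<bar>num / den - P\<bar> = \<bar>num - P * den\<bar> / den" using den by simp
  also have "\<dots> \<le> (13 * e) / (7/5)" using b den by (intro frac_le) auto
  also have "\<dots> \<le> 10 * e" using e by simp
  finally show ?thesis .
qed


lemma single:
  fixes q :: nat and w :: "nat \<Rightarrow> real" and m sg K e :: real
  assumes wpos: "\<And>k. k \<le> q \<Longrightarrow> 0 < w k"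
    and mono: "\<And>i j. i \<le> j \<Longrightarrow> j < q \<Longrightarrow> ln (w (Suc j)) - ln (w j) \<le> ln (w (Suc i)) - ln (w i)"
    and s1: "1 \<le> sg" and sK: "K \<le> sg" and K2: "2 \<le> K"
    and win1: "1 \<le> m - (K+2) * sg" and win2: "m + (K+2) * sg + 1 \<le> real q"
    and loc: "\<And>j::nat. \<bar>real j - m\<bar> \<le> (K+2) * sg \<Longrightarrow>
       \<bar>ln (w (Suc j)) - ln (w j) + (real j + 1/2 - m)/sg^2\<bar> \<le> e/sg"
    and e0: "0 \<le> e" and eK: "(K+3)*e \<le> 1/2"
  shows "\<exists>A>0. (\<forall>x. -K \<le> x \<longrightarrow> x \<le> K \<longrightarrow>
      \<bar>(\<Sum>k\<in>{k. k \<le> q \<and> -K \<le> (real k - m)/sg \<and> (real k - m)/sg \<le> x}. w k) / (A * sg)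
          - integral {-K..x} gg\<bar> \<le> 2*(K+2)*e*(4*K+3) + (2*K+3)/sg)
     \<and> (\<Sum>k\<in>{k. k \<le> q \<and> (real k - m)/sg < -K}. w k) \<le> 6 * A * sg / K
     \<and> (\<Sum>k\<in>{k. k \<le> q \<and> K < (real k - m)/sg}. w k) \<le> 6 * A * sg / K"
  using central[OF assms] lower_tail[OF assms] upper_tail[OF assms] AA_pos[OF assms] by blast


lemma sqrt2pi: "2 \<le> sqrt (2 * pi)" "sqrt (2 * pi) \<le> 3"
proof -
  have "sqrt 4 \<le> sqrt (2 * pi)" using pi_gt3 by (intro real_sqrt_le_mono) auto
  then show "2 \<le> sqrt (2 * pi)" by simp
  have "sqrt (2 * pi) \<le> sqrt 9" using pi_less_4 by (intro real_sqrt_le_mono) auto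
  then show "sqrt (2 * pi) \<le> 3" by simp
qed

theorem abstract_clt:
  fixes q :: "nat \<Rightarrow> nat" and w :: "nat \<Rightarrow> nat \<Rightarrow> real" and m sg :: "nat \<Rightarrow> real" and x :: real
  assumes wpos: "\<And>i k. k \<le> q i \<Longrightarrow> 0 < w i k"
    and mono: "\<And>i a b. a \<le> b \<Longrightarrow> b < q i \<Longrightarrow>
        ln (w i (Suc b)) - ln (w i b) \<le> ln (w i (Suc a)) - ln (w i a)"
    and sgl: "filterlim sg at_top sequentially"
    and loc: "\<And>K e. 0 < K \<Longrightarrow> 0 < e \<Longrightarrow> eventually (\<lambda>i. 1 \<le> m i - K * sg i \<and>
        m i + K * sg i + 1 \<le> real (q i) \<and>
        (\<forall>j::nat. \<bar>real j - m i\<bar> \<le> K * sg i \<longrightarrow>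
           \<bar>ln (w i (Suc j)) - ln (w i j) + (real j + 1/2 - m i)/(sg i)^2\<bar> \<le> e / sg i)) sequentially"
  shows "(\<lambda>i. (\<Sum>k\<in>{k. k \<le> q i \<and> (real k - m i)/sg i \<le> x}. w i k) / (\<Sum>k\<in>{..q i}. w i k))
           \<longlonglongrightarrow> measure NN {..x}"
proof (rule tendstoI)
  fix \<epsilon> :: real assume "0 < \<epsilon>"
  interpret NP: prob_space NN by (rule NN_prob)
  define \<epsilon>1 where "\<epsilon>1 = min (\<epsilon>/20) (1/10)"
  have e1: "0 < \<epsilon>1" "\<epsilon>1 \<le> 1/10" "10 * \<epsilon>1 < \<epsilon>" using \<open>0 < \<epsilon>\<close> unfolding \<epsilon>1_def by auto
  obtain n0 :: nat where n0: "2 + \<bar>x\<bar> + 6/\<epsilon>1 \<le> real n0" using real_arch_simple by blast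
  have ev1: "eventually (\<lambda>n. 2 + \<bar>x\<bar> + 6/\<epsilon>1 \<le> real n) sequentially"
    using eventually_ge_at_top[of n0] by eventually_elim (use n0 in auto)
  have ev2: "eventually (\<lambda>n. 1 - \<epsilon>1 < measure NN {- real n..real n}) sequentially"
    using order_tendstoD(1)[OF NN_lim, of "1 - \<epsilon>1"] e1 by simp
  obtain N where N: "2 + \<bar>x\<bar> + 6/\<epsilon>1 \<le> real N" "1 - \<epsilon>1 < measure NN {- real N..real N}"
    using eventually_happens'[OF _ eventually_conj[OF ev1 ev2]] by auto
  define K where "K = real N"
  have "0 \<le> 6/\<epsilon>1" using e1 by simp
  then have K2: "2 \<le> K" and xK: "-K \<le> x" "x \<le> K" using N(1) unfolding K_def by linarith+
  have K6: "6 / K \<le> \<epsilon>1"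
  proof -
    have "6/\<epsilon>1 \<le> K" using N(1) unfolding K_def by linarith
    then have "6 \<le> K * \<epsilon>1" using e1 by (simp add: field_simps)
    then show ?thesis using K2 by (simp add: field_simps)
  qed
  have PK: "1 - \<epsilon>1 < measure NN {-K..K}" using N(2) unfolding K_def by simp
  define e where "e = min (1/(2*(K+3))) (\<epsilon>1/(2*(K+2)*(4*K+3)))"
  have e0: "0 < e" unfolding e_def using K2 e1 by auto
  have eK: "(K+3)*e \<le> 1/2"
  proof -
    have "(K+3)*e \<le> (K+3) * (1/(2*(K+3)))" unfolding e_def using K2 by (intro mult_left_mono) auto
    moreover have "(K+3) * (1/(2*(K+3))) = 1/2" using K2 by simp
    ultimately show ?thesis by linarith
  qed
  have eK2: "2*(K+2)*e*(4*K+3) \<le> \<epsilon>1"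
  proof -
    have "2*(K+2)*e*(4*K+3) = (2*(K+2)*(4*K+3)) * e" by simp
    also have "\<dots> \<le> (2*(K+2)*(4*K+3)) * (\<epsilon>1/(2*(K+2)*(4*K+3)))"
      unfolding e_def using K2 by (intro mult_left_mono) auto
    also have "\<dots> = \<epsilon>1" using K2 by simp
    finally show ?thesis .
  qed
  have evs: "eventually (\<lambda>i. max 1 (max K ((2*K+3)/\<epsilon>1)) \<le> sg i) sequentially"
    using sgl unfolding filterlim_at_top by blast
  have evl: "eventually (\<lambda>i. 1 \<le> m i - (K+2) * sg i \<and>
        m i + (K+2) * sg i + 1 \<le> real (q i) \<and>
        (\<forall>j::nat. \<bar>real j - m i\<bar> \<le> (K+2) * sg i \<longrightarrow>
           \<bar>ln (w i (Suc j)) - ln (w i j) + (real j + 1/2 - m i)/(sg i)^2\<bar> \<le> e / sg i)) sequentially"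
    using loc[of "K+2" e] K2 e0 by simp
  show "eventually (\<lambda>i. dist ((\<Sum>k\<in>{k. k \<le> q i \<and> (real k - m i)/sg i \<le> x}. w i k) / (\<Sum>k\<in>{..q i}. w i k))
           (measure NN {..x}) < \<epsilon>) sequentially"
    using evs evl
  proof eventually_elim
    case (elim i)
    have s1: "1 \<le> sg i" and sK: "K \<le> sg i" and s3: "(2*K+3)/\<epsilon>1 \<le> sg i" using elim(1) by auto
    have sp: "0 < sg i" using s1 by simp
    have w1: "1 \<le> m i - (K+2) * sg i" and w2: "m i + (K+2) * sg i + 1 \<le> real (q i)"
      and lc: "\<And>j::nat. \<bar>real j - m i\<bar> \<le> (K+2) * sg i \<Longrightarrow>
           \<bar>ln (w i (Suc j)) - ln (w i j) + (real j + 1/2 - m i)/(sg i)^2\<bar> \<le> e / sg i"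
      using elim(2) by auto
    have ex: "\<exists>A>0. (\<forall>y. -K \<le> y \<longrightarrow> y \<le> K \<longrightarrow>
      \<bar>(\<Sum>k\<in>{k. k \<le> q i \<and> -K \<le> (real k - m i)/sg i \<and> (real k - m i)/sg i \<le> y}. w i k) / (A * sg i)
          - integral {-K..y} gg\<bar> \<le> 2*(K+2)*e*(4*K+3) + (2*K+3)/sg i)
     \<and> (\<Sum>k\<in>{k. k \<le> q i \<and> (real k - m i)/sg i < -K}. w i k) \<le> 6 * A * sg i / K
     \<and> (\<Sum>k\<in>{k. k \<le> q i \<and> K < (real k - m i)/sg i}. w i k) \<le> 6 * A * sg i / K"
      by (rule single[where q="q i" and w="w i" and sg="sg i" and K=K and m="m i" and e=e,
            OF wpos mono s1 sK K2 w1 w2 lc less_imp_le[OF e0] eK])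
    then obtain A where A: "0 < A"
      and cen0: "\<forall>y. -K \<le> y \<longrightarrow> y \<le> K \<longrightarrow>
      \<bar>(\<Sum>k\<in>{k. k \<le> q i \<and> -K \<le> (real k - m i)/sg i \<and> (real k - m i)/sg i \<le> y}. w i k) / (A * sg i)
          - integral {-K..y} gg\<bar> \<le> 2*(K+2)*e*(4*K+3) + (2*K+3)/sg i"
      and lo: "(\<Sum>k\<in>{k. k \<le> q i \<and> (real k - m i)/sg i < -K}. w i k) \<le> 6 * A * sg i / K"
      and hi: "(\<Sum>k\<in>{k. k \<le> q i \<and> K < (real k - m i)/sg i}. w i k) \<le> 6 * A * sg i / K"
      by (elim exE conjE) (rule that)
    have cen: "\<And>y. -K \<le> y \<Longrightarrow> y \<le> K \<Longrightarrow>
      \<bar>(\<Sum>k\<in>{k. k \<le> q i \<and> -K \<le> (real k - m i)/sg i \<and> (real k - m i)/sg i \<le> y}. w i k) / (A * sg i)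
          - integral {-K..y} gg\<bar> \<le> 2*(K+2)*e*(4*K+3) + (2*K+3)/sg i"
      using cen0 by blast
    define t where "t k = (real k - m i)/sg i" for k
    define W where "W = A * sg i"
    have W: "0 < W" unfolding W_def using A sp by simp
    define Lo where "Lo = {k. k \<le> q i \<and> t k < -K}"
    define Hi where "Hi = {k. k \<le> q i \<and> K < t k}"
    define Cx where "Cx = {k. k \<le> q i \<and> -K \<le> t k \<and> t k \<le> x}"
    define CK where "CK = {k. k \<le> q i \<and> -K \<le> t k \<and> t k \<le> K}"
    have fin: "finite Lo" "finite Hi" "finite Cx" "finite CK" unfolding Lo_def Hi_def Cx_def CK_def by auto
    have Sx: "{k. k \<le> q i \<and> (real k - m i)/sg i \<le> x} = Lo \<union> Cx" "Lo \<inter> Cx = {}"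
      unfolding Lo_def Cx_def t_def using xK by auto
    have Sall: "{..q i} = Lo \<union> CK \<union> Hi" "Lo \<inter> CK = {}" "(Lo \<union> CK) \<inter> Hi = {}"
      unfolding Lo_def CK_def Hi_def t_def using K2 by auto
    define sLo where "sLo = (\<Sum>k\<in>Lo. w i k) / W"
    define sHi where "sHi = (\<Sum>k\<in>Hi. w i k) / W"
    define sCx where "sCx = (\<Sum>k\<in>Cx. w i k) / W"
    define sCK where "sCK = (\<Sum>k\<in>CK. w i k) / W"
    have num: "(\<Sum>k\<in>{k. k \<le> q i \<and> (real k - m i)/sg i \<le> x}. w i k) = W * (sLo + sCx)"
      unfolding Sx(1) sLo_def sCx_def using W fin Sx(2) by (simp add: sum.union_disjoint field_simps)
    have den: "(\<Sum>k\<in>{..q i}. w i k) = W * (sLo + sCK + sHi)"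
      unfolding Sall(1) sLo_def sCK_def sHi_def using W fin Sall(2,3)
      by (simp add: sum.union_disjoint field_simps)
    have ratio: "(\<Sum>k\<in>{k. k \<le> q i \<and> (real k - m i)/sg i \<le> x}. w i k) / (\<Sum>k\<in>{..q i}. w i k)
        = (sLo + sCx) / (sLo + sCK + sHi)"
      unfolding num den using W by simp
    have nn: "0 \<le> sLo" "0 \<le> sHi" unfolding sLo_def sHi_def Lo_def Hi_def using W wpos
      by (auto intro!: divide_nonneg_pos sum_nonneg simp: less_imp_le)
    have lo6: "sLo \<le> \<epsilon>1"
    proof -
      have "sLo \<le> (6 * A * sg i / K) / W" unfolding sLo_def Lo_def t_def by (rule divide_right_mono[OF lo less_imp_le[OF W]])
      also have "\<dots> = 6 / K" unfolding W_def using A sp by simp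
      finally show ?thesis using K6 by simp
    qed
    have hi6: "sHi \<le> \<epsilon>1"
    proof -
      have "sHi \<le> (6 * A * sg i / K) / W" unfolding sHi_def Hi_def t_def by (rule divide_right_mono[OF hi less_imp_le[OF W]])
      also have "\<dots> = 6 / K" unfolding W_def using A sp by simp
      finally show ?thesis using K6 by simp
    qed
    have del: "2*(K+2)*e*(4*K+3) + (2*K+3)/sg i \<le> 2 * \<epsilon>1"
    proof -
      have "(2*K+3)/sg i \<le> \<epsilon>1" using s3 e1 sp K2 by (simp add: field_simps)
      then show ?thesis using eK2 by linarith
    qed
    have cx: "\<bar>sCx - integral {-K..x} gg\<bar> \<le> 2 * \<epsilon>1"
      using cen[OF xK] del unfolding sCx_def Cx_def t_def W_def by linarith
    have ck: "\<bar>sCK - integral {-K..K} gg\<bar> \<le> 2 * \<epsilon>1"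
      using cen[of K] K2 del unfolding sCK_def CK_def t_def W_def by linarith
    define L where "L = sqrt (2 * pi)"
    have Lp: "0 < L" unfolding L_def by simp
    have Gx: "integral {-K..x} gg = L * measure NN {-K..x}"
      using NN_interval[of "-K" x] xK Lp unfolding L_def by simp
    have GK: "integral {-K..K} gg = L * measure NN {-K..K}"
      using NN_interval[of "-K" K] K2 Lp unfolding L_def by simp
    have t1: "measure NN {..x} - measure NN {-K..x} \<le> 1 - measure NN {-K..K}"
      "measure NN {-K..x} \<le> measure NN {..x}" using NN_tail[OF xK] by auto
    have P01: "0 \<le> measure NN {..x}" "measure NN {..x} \<le> 1" by (auto intro: NP.prob_le_1)
    have PK1: "measure NN {-K..K} \<le> 1" by (rule NP.prob_le_1)
    have fa: "\<bar>(sLo + sCx) / (sLo + sCK + sHi) - measure NN {..x}\<bar> \<le> 10 * \<epsilon>1"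
    proof (rule final_arith[where L=L and Gx="integral {-K..x} gg" and GK="integral {-K..K} gg"])
      show "2 \<le> L" "L \<le> 3" unfolding L_def using sqrt2pi by auto
      show "0 \<le> measure NN {..x}" "measure NN {..x} \<le> 1" by fact+
      show "0 < \<epsilon>1" "\<epsilon>1 \<le> 1/10" using e1 by auto
      show "\<bar>sLo + sCx - integral {-K..x} gg\<bar> \<le> 3 * \<epsilon>1" using cx nn lo6 by linarith
      show "\<bar>sLo + sCK + sHi - integral {-K..K} gg\<bar> \<le> 4 * \<epsilon>1" using ck nn lo6 hi6 by linarith
      have "measure NN {..x} - \<epsilon>1 \<le> measure NN {-K..x}" using t1 PK by linarith
      then show "L * (measure NN {..x} - \<epsilon>1) \<le> integral {-K..x} gg"
        unfolding Gx using Lp by (intro mult_left_mono) auto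
      show "integral {-K..x} gg \<le> L * measure NN {..x}"
        unfolding Gx using Lp t1 by (intro mult_left_mono) auto
      show "L * (1 - \<epsilon>1) \<le> integral {-K..K} gg"
        unfolding GK using Lp PK by (intro mult_left_mono) auto
      show "integral {-K..K} gg \<le> L" unfolding GK using Lp PK1 by (simp add: mult_left_le)
    qed
    show ?case unfolding dist_real_def ratio using fa e1 by linarith
  qed
qed


context
  fixes c :: real
  assumes c1: "1 \<le> c"
begin

definition "RR = sqrt (1 + 6*c + c^2)"
definition "mu = (c - 1 + RR) / 4"
definition "sig2 = (c - 1)/8 + (1 + c)^2 / (8 * RR)"
definition "al = c - mu"
definition "be = 1 + mu"

lemma RR2: "RR^2 = 1 + 6*c + c^2"
  unfolding RR_def using c1 by (simp add: add_nonneg_nonneg)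

lemma RR_pos: "0 < RR" unfolding RR_def using c1 by (simp add: add_pos_nonneg)

lemma RR_ge: "c + 1 \<le> RR"
proof -
  have "(c+1)^2 \<le> RR^2" unfolding RR2 using c1 by (simp add: power2_eq_square algebra_simps)
  then show ?thesis using RR_pos c1 by (simp add: power2_le_iff_abs_le)
qed

lemma RR_lt: "RR < 3*c + 1"
proof -
  have "RR^2 < (3*c+1)^2" unfolding RR2 using c1 by (simp add: power2_eq_square algebra_simps)
  then show ?thesis using RR_pos c1 by (smt (verit) power_mono)
qed

lemma mu_pos: "0 < mu" unfolding mu_def using RR_ge c1 by simp
lemma al_pos: "0 < al" unfolding al_def mu_def using RR_lt by simp
lemma be_pos: "0 < be" unfolding be_def using mu_pos by simp
lemma sig2_pos: "0 < sig2" unfolding sig2_def using c1 RR_pos by (intro add_nonneg_pos) auto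

lemma mu_sq: "mu^2 = ((c+1)^2 + (c-1)*RR)/8"
proof -
  have "mu^2 = ((c-1)^2 + 2*(c-1)*RR + RR^2)/16" unfolding mu_def by (simp add: power2_eq_square algebra_simps)
  then show ?thesis unfolding RR2 by (simp add: power2_eq_square algebra_simps)
qed

lemma albe: "al * be = mu^2"
proof -
  have "16 * (al * be) = (3*c + 1 - RR) * (c + 3 + RR)" unfolding al_def be_def mu_def by (simp add: field_simps)
  also have "\<dots> = 3*c^2 + 10*c + 3 + (2*c - 2)*RR - RR^2" by (simp add: power2_eq_square algebra_simps)
  also have "\<dots> = 2 * ((c+1)^2 + (c-1)*RR)" unfolding RR2 by (simp add: power2_eq_square algebra_simps)
  also have "\<dots> = 16 * mu^2" unfolding mu_sq by simp
  finally show ?thesis by simp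
qed

lemma sig2_RR: "sig2 * RR = mu^2"
proof -
  have "sig2 * RR = (c-1)*RR/8 + (1+c)^2/8" unfolding sig2_def using RR_pos by (simp add: field_simps)
  also have "\<dots> = ((c+1)^2 + (c-1)*RR)/8" by (simp add: field_simps)
  finally show ?thesis unfolding mu_sq .
qed

lemma ident: "1/al - 1/be + 2/mu = 1/sig2"
proof -
  have "1/al - 1/be = (be - al)/(al*be)" using al_pos be_pos by (simp add: field_simps)
  also have "\<dots> = (be - al)/mu^2" by (simp add: albe)
  finally have "1/al - 1/be + 2/mu = (be - al)/mu^2 + 2*mu/mu^2" using mu_pos by (simp add: power2_eq_square)
  also have "\<dots> = (be - al + 2*mu)/mu^2" by (simp add: add_divide_distrib)
  also have "be - al + 2*mu = RR" unfolding be_def al_def mu_def by (simp add: field_simps)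
  also have "RR / mu^2 = 1/sig2" using sig2_RR RR_pos sig2_pos mu_pos by (simp add: field_simps)
  finally show ?thesis .
qed

end


lemma ln_err:
  fixes x b :: real
  assumes "\<bar>x\<bar> \<le> b" "b \<le> 1/2"
  shows "\<bar>ln (1 + x) - x\<bar> \<le> 2 * b^2"
proof -
  have "\<bar>ln (1 + x) - x\<bar> \<le> 2 * x^2" using abs_ln_one_plus_x_minus_x_bound[of x] assms by simp
  also have "\<bar>x\<bar>^2 \<le> b^2" by (rule power_mono) (use assms in auto)
  then have "x^2 \<le> b^2" by simp
  then have "2 * x^2 \<le> 2 * b^2" by simp
  finally show ?thesis .
qed

lemma x_bound:
  fixes v a y B :: real
  assumes "0 < a" "1 \<le> y" "\<bar>v\<bar> \<le> B * y"
  shows "\<bar>v / (a * y^2)\<bar> \<le> (B / a) / y"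
proof -
  have "\<bar>v / (a * y^2)\<bar> = \<bar>v\<bar> / (a * y^2)" using assms by (simp add: abs_divide)
  also have "\<dots> \<le> (B * y) / (a * y^2)" using assms by (intro divide_right_mono) auto
  also have "\<dots> = (B / a) / y" using assms by (simp add: power2_eq_square field_simps)
  finally show ?thesis .
qed

lemma loc_core:
  fixes al be mu sgm y K e u :: real
  assumes pos: "0 < al" "0 < be" "0 < mu" "0 < sgm" "0 < K" "0 < e" "1 \<le> y"
    and ident: "1/al - 1/be + 2/mu = 1/sgm^2" and albe: "al * be = mu^2"
    and u: "\<bar>u\<bar> \<le> K * sgm * y"
    and y1: "2 * (K* sgm/al) \<le> y" and y2: "2 * ((K* sgm+1)/be) \<le> y" and y3: "2 * ((K* sgm+1)/mu) \<le> y"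
    and y4: "(\<bar>1/be - 2/mu + 1/(2* sgm^2)\<bar> + 2*(K* sgm/al)^2 + 2*((K* sgm+1)/be)^2
              + 4*((K* sgm+1)/mu)^2) * sgm / e \<le> y"
  shows "\<bar>ln ((al*y^2 - u) * (be*y^2 + u + 1) / (mu*y^2 + u + 1)^2) + (u + 1/2)/(sgm*y)^2\<bar> \<le> e/(sgm*y)"
proof -
  define n where "n = y^2"
  have n: "0 < n" unfolding n_def using pos by simp
  define x1 where "x1 = (-u)/(al*y^2)"
  define x2 where "x2 = (u+1)/(be*y^2)"
  define x3 where "x3 = (u+1)/(mu*y^2)"
  define b1 where "b1 = K* sgm/al"
  define b2 where "b2 = (K* sgm+1)/be"
  define b3 where "b3 = (K* sgm+1)/mu"
  have u1: "\<bar>u+1\<bar> \<le> (K* sgm+1) * y" using u pos by (simp add: algebra_simps)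
  have bx1: "\<bar>x1\<bar> \<le> b1 / y" unfolding x1_def b1_def using x_bound[of al y "-u" "K* sgm"] u pos by simp
  have bx2: "\<bar>x2\<bar> \<le> b2 / y" unfolding x2_def b2_def using x_bound[of be y "u+1" "K* sgm+1"] u1 pos by simp
  have bx3: "\<bar>x3\<bar> \<le> b3 / y" unfolding x3_def b3_def using x_bound[of mu y "u+1" "K* sgm+1"] u1 pos by simp
  have half: "b1 / y \<le> 1/2" "b2 / y \<le> 1/2" "b3 / y \<le> 1/2"
  proof -
    have yp: "0 < y" using pos by simp
    have h: "b / y \<le> 1/2" if "2 * b \<le> y" for b
    proof -
      have "b \<le> 1/2 * y" using that by simp
      then show ?thesis using yp by (simp add: pos_divide_le_eq)
    qed
    show "b1 / y \<le> 1/2" using h y1 unfolding b1_def by blast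
    show "b2 / y \<le> 1/2" using h y2 unfolding b2_def by blast
    show "b3 / y \<le> 1/2" using h y3 unfolding b3_def by blast
  qed
  have p1: "0 < 1 + x1" "0 < 1 + x2" "0 < 1 + x3" using bx1 bx2 bx3 half by linarith+
  have f1: "al*y^2 - u = al*y^2 * (1 + x1)" unfolding x1_def using pos by (simp add: field_simps)
  have f2: "be*y^2 + u + 1 = be*y^2 * (1 + x2)" unfolding x2_def using pos by (simp add: field_simps)
  have f3: "mu*y^2 + u + 1 = mu*y^2 * (1 + x3)" unfolding x3_def using pos by (simp add: field_simps)
  have nume: "(al*y^2 - u) * (be*y^2 + u + 1) = mu^2 * ((y^2)^2 * ((1 + x1) * (1 + x2)))"
  proof -
    have "(al*y^2 - u) * (be*y^2 + u + 1) = (al * be) * ((y^2 * y^2) * ((1 + x1) * (1 + x2)))"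
      unfolding f1 f2 by (simp only: mult_ac)
    then show ?thesis unfolding albe by (simp add: power2_eq_square[of "y^2"])
  qed
  have dene: "(mu*y^2 + u + 1)^2 = mu^2 * ((y^2)^2 * (1 + x3)^2)"
    unfolding f3 by (simp only: power_mult_distrib mult_ac)
  have "(al*y^2 - u) * (be*y^2 + u + 1) / (mu*y^2 + u + 1)^2
        = (mu^2 * ((y^2)^2 * ((1 + x1) * (1 + x2)))) / (mu^2 * ((y^2)^2 * (1 + x3)^2))"
    unfolding nume dene ..
  also have "\<dots> = (1 + x1) * (1 + x2) / (1 + x3)^2" using pos by simp
  finally have rat: "(al*y^2 - u) * (be*y^2 + u + 1) / (mu*y^2 + u + 1)^2 = (1 + x1) * (1 + x2) / (1 + x3)^2" .
  have lnr: "ln ((1 + x1) * (1 + x2) / (1 + x3)^2) = ln (1 + x1) + ln (1 + x2) - 2 * ln (1 + x3)"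
    using p1 by (simp add: ln_mult ln_div ln_realpow)
  have r1: "\<bar>ln (1 + x1) - x1\<bar> \<le> 2 * (b1/y)^2" by (rule ln_err[OF bx1 half(1)])
  have r2: "\<bar>ln (1 + x2) - x2\<bar> \<le> 2 * (b2/y)^2" by (rule ln_err[OF bx2 half(2)])
  have r3: "\<bar>ln (1 + x3) - x3\<bar> \<le> 2 * (b3/y)^2" by (rule ln_err[OF bx3 half(3)])
  have lin: "x1 + x2 - 2 * x3 + (u + 1/2)/(sgm*y)^2 = (1/be - 2/mu + 1/(2* sgm^2)) / y^2"
  proof -
    have "x1 + x2 - 2 * x3 + (u + 1/2)/(sgm*y)^2
        = ((-u)/al + (u+1)/be - 2 * ((u+1)/mu) + (u + 1/2)/sgm^2) / y^2"
      unfolding x1_def x2_def x3_def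
      by (simp add: add_divide_distrib diff_divide_distrib power_mult_distrib divide_divide_eq_left mult.commute)
    also have "(-u)/al + (u+1)/be - 2 * ((u+1)/mu) + (u + 1/2)/sgm^2
        = - u * (1/al - 1/be + 2/mu) + (1/be - 2/mu) + (u + 1/2)/sgm^2"
    proof -
      define A' where "A' = 1/al"
      define B' where "B' = 1/be"
      define M' where "M' = 1/mu"
      have eqs: "(-u)/al = -u * A'" "(u+1)/be = u * B' + B'" "(u+1)/mu = u * M' + M'" "2/mu = 2 * M'"
        unfolding A'_def B'_def M'_def by (simp_all add: add_divide_distrib)
      show ?thesis unfolding A'_def[symmetric] B'_def[symmetric] M'_def[symmetric]
        by (simp only: eqs) (simp add: algebra_simps)
    qed
    also have "\<dots> = 1/be - 2/mu + 1/(2* sgm^2)"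
    proof -
      define S' where "S' = 1/sgm^2"
      have eqs: "(u + 1/2)/sgm^2 = u * S' + S'/2" "1/(2* sgm^2) = S'/2"
        unfolding S'_def by (simp_all add: add_divide_distrib)
      show ?thesis unfolding ident S'_def[symmetric] by (simp only: eqs)
    qed
    finally show ?thesis .
  qed
  define C0 where "C0 = 1/be - 2/mu + 1/(2* sgm^2)"
  have EQ: "ln ((al*y^2 - u) * (be*y^2 + u + 1) / (mu*y^2 + u + 1)^2) + (u + 1/2)/(sgm*y)^2
      = C0 / y^2 + (ln (1 + x1) - x1) + (ln (1 + x2) - x2) - 2 * (ln (1 + x3) - x3)"
    unfolding rat lnr C0_def using lin by (smt (verit))
  have "\<bar>ln ((al*y^2 - u) * (be*y^2 + u + 1) / (mu*y^2 + u + 1)^2) + (u + 1/2)/(sgm*y)^2\<bar>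
      \<le> \<bar>C0\<bar> / y^2 + 2 * (b1/y)^2 + 2 * (b2/y)^2 + 2 * (2 * (b3/y)^2)"
  proof -
    have "\<bar>C0 / y^2\<bar> = \<bar>C0\<bar> / y^2" by (simp add: abs_divide)
    then show ?thesis unfolding EQ using r1 r2 r3 by (smt (verit))
  qed
  also have "\<dots> = (\<bar>C0\<bar> + 2*b1^2 + 2*b2^2 + 4*b3^2) / y^2"
    by (simp add: power_divide add_divide_distrib)
  also have "\<dots> \<le> e/(sgm*y)"
  proof -
    have "(\<bar>C0\<bar> + 2*b1^2 + 2*b2^2 + 4*b3^2) * sgm / e \<le> y" using y4 unfolding C0_def b1_def b2_def b3_def .
    then have S: "(\<bar>C0\<bar> + 2*b1^2 + 2*b2^2 + 4*b3^2) \<le> e * y / sgm" using pos by (simp add: field_simps)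
    have "(\<bar>C0\<bar> + 2*b1^2 + 2*b2^2 + 4*b3^2) / y^2 \<le> (e * y / sgm) / y^2"
      using S pos by (intro divide_right_mono) auto
    also have "(e * y / sgm) / y^2 = e/(sgm*y)" using pos by (simp add: power2_eq_square)
    finally show ?thesis .
  qed
  finally show ?thesis .
qed


lemma bw_pos: "k \<le> q \<Longrightarrow> 0 < B_weight p q k"
  unfolding B_weight_def by simp

lemma bw_ratio:
  assumes "j < q"
  shows "B_weight p q (Suc j) * (real j + 1)^2 = B_weight p q j * ((real q - real j) * (real p + real j + 1))"
proof -
  have n1: "Suc j * (q choose Suc j) = (q - j) * (q choose j)"
    using binomial_absorption[of j q] binomial_absorb_comp[of q j] by simp
  have n2: "Suc (p + j) * ((p + j) choose j) = ((p + Suc j) choose Suc j) * Suc j"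
    using Suc_times_binomial_eq[of "p + j" j] by simp
  have r1: "real (q choose Suc j) * (real j + 1) = real (q choose j) * (real q - real j)"
  proof -
    have "real (Suc j * (q choose Suc j)) = real ((q - j) * (q choose j))" using n1 by simp
    then show ?thesis using assms by (simp add: of_nat_diff algebra_simps)
  qed
  have r2: "real ((p + Suc j) choose Suc j) * (real j + 1) = real ((p + j) choose j) * (real p + real j + 1)"
  proof -
    have "real (Suc (p + j) * ((p + j) choose j)) = real (((p + Suc j) choose Suc j) * Suc j)" using n2 by simp
    then show ?thesis by (simp add: algebra_simps)
  qed
  have "B_weight p q (Suc j) * (real j + 1)^2
      = (real (q choose Suc j) * (real j + 1)) * (real ((p + Suc j) choose Suc j) * (real j + 1))"
    unfolding B_weight_def by (simp add: power2_eq_square algebra_simps)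
  also have "\<dots> = (real (q choose j) * (real q - real j)) * (real ((p + j) choose j) * (real p + real j + 1))"
    unfolding r1 r2 ..
  also have "\<dots> = B_weight p q j * ((real q - real j) * (real p + real j + 1))"
    unfolding B_weight_def by (simp add: algebra_simps)
  finally show ?thesis .
qed

definition "rho p q j = (real q - real j) * (real p + real j + 1) / (real j + 1)^2"

lemma rho_pos: "j < q \<Longrightarrow> 0 < rho p q j"
  unfolding rho_def by (intro divide_pos_pos mult_pos_pos) auto

lemma ln_diff:
  assumes "j < q"
  shows "ln (B_weight p q (Suc j)) - ln (B_weight p q j) = ln (rho p q j)"
proof -
  have "B_weight p q (Suc j) = B_weight p q j * rho p q j"
    using bw_ratio[OF assms, of p] unfolding rho_def by (simp add: field_simps)
  then show ?thesis using bw_pos[of j q p] rho_pos[OF assms, of p] assms by (simp add: ln_mult)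
qed

lemma rho_mono:
  assumes "a \<le> b" "b < q"
  shows "rho p q b \<le> rho p q a"
proof -
  have e: "rho p q j = ((real q - real j) / (real j + 1)) * ((real p + real j + 1) / (real j + 1))" for j
    unfolding rho_def by (simp add: power2_eq_square)
  have ab: "real a \<le> real b" "real b < real q" using assms by auto
  have f1: "(real q - real b) / (real b + 1) \<le> (real q - real a) / (real a + 1)"
  proof -
    have "(real q - real b) * (real a + 1) \<le> (real q - real a) * (real b + 1)"
    proof -
      have "(real q - real a) * (real b + 1) - (real q - real b) * (real a + 1) = (real q + 1) * (real b - real a)"
        by (simp add: algebra_simps)
      moreover have "0 \<le> (real q + 1) * (real b - real a)" using ab by simp
      ultimately show ?thesis by linarith
    qed
    then show ?thesis by (simp add: divide_simps)
  qed
  have f2: "(real p + real b + 1) / (real b + 1) \<le> (real p + real a + 1) / (real a + 1)"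
  proof -
    have "(real p + real b + 1) * (real a + 1) \<le> (real p + real a + 1) * (real b + 1)"
    proof -
      have "(real p + real a + 1) * (real b + 1) - (real p + real b + 1) * (real a + 1) = real p * (real b - real a)"
        by (simp add: algebra_simps)
      moreover have "0 \<le> real p * (real b - real a)" using ab by simp
      ultimately show ?thesis by linarith
    qed
    then show ?thesis by (simp add: divide_simps)
  qed
  show ?thesis unfolding e
    by (rule mult_mono[OF f1 f2]) (use ab in auto)
qed

lemma ln_mono_B:
  assumes "a \<le> b" "b < q"
  shows "ln (B_weight p q (Suc b)) - ln (B_weight p q b) \<le> ln (B_weight p q (Suc a)) - ln (B_weight p q a)"
  using assms by (simp add: ln_diff rho_mono rho_pos)

lemma cdf_normalized:
  fixes c :: real and n :: nat
  defines "q \<equiv> nat \<lfloor>c * real n\<rfloor>"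
  defines "mm \<equiv> m_pq (real n) (real q)" and "ss \<equiv> sqrt (s2_pq (real n) (real q))"
  shows "cdf (normalized_B c n) x =
     (\<Sum>k\<in>{k. k \<le> q \<and> (real k - mm)/ss \<le> x}. B_weight n q k) / (\<Sum>k\<in>{..q}. B_weight n q k)"
proof -
  define Z where "Z = (\<Sum>j\<le>q. B_weight n q j)"
  have Zp: "0 < Z" unfolding Z_def by (intro sum_pos) (auto simp: bw_pos)
  define f where "f k = (if k \<le> q then B_weight n q k / Z else 0)" for k
  have f0: "\<And>k. 0 \<le> f k" unfolding f_def using Zp bw_pos by (auto intro: less_imp_le)
  have f1: "(\<integral>\<^sup>+k. ennreal (f k) \<partial>count_space UNIV) = 1"
  proof -
    have "(\<integral>\<^sup>+k. ennreal (f k) \<partial>count_space UNIV) = (\<Sum>k\<in>{..q}. ennreal (f k))"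
      by (rule nn_integral_count_space') (auto simp: f_def)
    also have "\<dots> = ennreal (\<Sum>k\<in>{..q}. f k)" using f0 by (simp add: sum_ennreal)
    also have "(\<Sum>k\<in>{..q}. f k) = 1" unfolding f_def Z_def using Zp[unfolded Z_def]
      by (simp add: sum_divide_distrib[symmetric])
    finally show ?thesis by simp
  qed
  have Bdef: "B_pmf n q = embed_pmf f"
    unfolding B_pmf_def f_def Z_def by simp
  have pmfB: "pmf (B_pmf n q) k = f k" for k unfolding Bdef by (rule pmf_embed_pmf[OF f0 f1])
  have setB: "set_pmf (B_pmf n q) \<subseteq> {..q}" using pmfB by (auto simp: set_pmf_iff f_def split: if_splits)
  define A where "A = {k. (real k - mm)/ss \<le> x}"
  have "cdf (normalized_B c n) x = measure (measure_pmf (B_pmf n q)) A"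
    unfolding cdf_def normalized_B_def Let_def q_def[symmetric] mm_def[symmetric] ss_def[symmetric] A_def
    by (subst measure_distr) (auto simp: vimage_def)
  also have "\<dots> = measure (measure_pmf (B_pmf n q)) (A \<inter> {..q})"
  proof -
    have "A \<inter> set_pmf (B_pmf n q) = (A \<inter> {..q}) \<inter> set_pmf (B_pmf n q)" using setB by auto
    then show ?thesis by (metis measure_Int_set_pmf)
  qed
  also have "\<dots> = (\<Sum>k\<in>A \<inter> {..q}. f k)" by (subst measure_measure_pmf_finite) (auto simp: pmfB)
  also have "\<dots> = (\<Sum>k\<in>A \<inter> {..q}. B_weight n q k) / Z"
    unfolding sum_divide_distrib by (intro sum.cong) (auto simp: f_def)
  also have "A \<inter> {..q} = {k. k \<le> q \<and> (real k - mm)/ss \<le> x}" unfolding A_def by auto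
  finally show ?thesis unfolding Z_def atMost_def by simp
qed


lemma scal:
  assumes c: "1 \<le> c" and p: "0 < p"
  shows "m_pq p (c*p) = mu c * p" "s2_pq p (c*p) = sig2 c * p"
proof -
  have sq: "sqrt (p^2 + 6*p*(c*p) + (c*p)^2) = p * RR c"
  proof -
    have "p^2 + 6*p*(c*p) + (c*p)^2 = p^2 * (1 + 6*c + c^2)" by (simp add: power2_eq_square algebra_simps)
    then show ?thesis unfolding RR_def[OF c] using p by (simp add: real_sqrt_mult)
  qed
  show "m_pq p (c*p) = mu c * p" unfolding m_pq_def sq mu_def[OF c] by (simp add: algebra_simps)
  have "(p + c*p)^2 / (8 * (p * RR c)) = p * ((1 + c)^2 / (8 * RR c))"
    using p RR_pos[OF c] by (simp add: power2_eq_square field_simps)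
  then show "s2_pq p (c*p) = sig2 c * p" unfolding s2_pq_def sq sig2_def[OF c]
    by (simp add: algebra_simps diff_divide_distrib)
qed

theorem mainTheorem11:
  fixes c :: real and r :: "nat \<Rightarrow> nat"
  assumes "c \<ge> 1"
    and "\<And>k. r k > 0 \<and> c * real (r k) \<in> \<int>"
    and "filterlim r at_top sequentially"
  shows "weak_conv_m (\<lambda>k. normalized_B c (r k)) std_normal_distribution"
proof -
  have c: "1 \<le> c" using assms(1) by simp
  define q where "q i = nat \<lfloor>c * real (r i)\<rfloor>" for i
  define w where "w i = B_weight (r i) (q i)" for i
  define mm where "mm i = m_pq (real (r i)) (real (q i))" for i
  define ss where "ss i = sqrt (s2_pq (real (r i)) (real (q i)))" for i
  define sgm where "sgm = sqrt (sig2 c)"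
  have sig2p: "0 < sig2 c" by (rule sig2_pos[OF c])
  have sgmp: "0 < sgm" unfolding sgm_def using sig2p by simp
  have sgm2: "sgm^2 = sig2 c" unfolding sgm_def using sig2p by simp
  have rpos: "0 < real (r i)" for i using assms(2)[of i] by simp
  have qr: "real (q i) = c * real (r i)" for i
  proof -
    obtain z where z: "c * real (r i) = of_int z" using assms(2)[of i] Ints_cases by metis
    have "0 \<le> c * real (r i)" using c by simp
    then have "0 \<le> z" using z by simp
    then show ?thesis unfolding q_def z by simp
  qed
  have mmr: "mm i = mu c * real (r i)" for i unfolding mm_def qr using scal(1)[OF c rpos] by simp
  have ssr: "ss i = sgm * sqrt (real (r i))" for i
    unfolding ss_def qr sgm_def using scal(2)[OF c rpos] sig2p by (simp add: real_sqrt_mult)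
  have main: "(\<lambda>i. (\<Sum>k\<in>{k. k \<le> q i \<and> (real k - mm i)/ss i \<le> x}. w i k) / (\<Sum>k\<in>{..q i}. w i k))
           \<longlonglongrightarrow> measure NN {..x}" for x
  proof (rule abstract_clt)
    show "\<And>i k. k \<le> q i \<Longrightarrow> 0 < w i k" unfolding w_def by (rule bw_pos)
    show "\<And>i a b. a \<le> b \<Longrightarrow> b < q i \<Longrightarrow>
        ln (w i (Suc b)) - ln (w i b) \<le> ln (w i (Suc a)) - ln (w i a)" unfolding w_def by (rule ln_mono_B)
    have "filterlim (\<lambda>i. sqrt (real (r i))) at_top sequentially"
      by (rule filterlim_compose[OF sqrt_at_top filterlim_compose[OF filterlim_real_sequentially assms(3)]])
    then have "filterlim (\<lambda>i. sgm * sqrt (real (r i))) at_top sequentially"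
      by (rule filterlim_tendsto_pos_mult_at_top[OF tendsto_const sgmp])
    then show "filterlim ss at_top sequentially" unfolding ssr[abs_def] .
    fix K e :: real assume K: "0 < K" and e: "0 < e"
    define al' where "al' = al c"
    define be' where "be' = be c"
    define mu' where "mu' = mu c"
    have alp: "0 < al'" "0 < be'" "0 < mu'" unfolding al'_def be'_def mu'_def
      using al_pos[OF c] be_pos[OF c] mu_pos[OF c] by auto
    define Cst where "Cst = (\<bar>1/be' - 2/mu' + 1/(2* sgm^2)\<bar> + 2*(K* sgm/al')^2 + 2*((K* sgm+1)/be')^2
              + 4*((K* sgm+1)/mu')^2)"
    define Y where "Y = max (max (max 1 (2 * (K* sgm/al'))) (max (2 * ((K* sgm+1)/be')) (2 * ((K* sgm+1)/mu'))))
       (max (Cst * sgm / e) (max ((K* sgm+1)/mu') ((K* sgm+1)/al')))"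
    have Y1: "1 \<le> Y" unfolding Y_def by simp
    have ev: "eventually (\<lambda>i. nat \<lceil>Y^2\<rceil> \<le> r i) sequentially"
      using assms(3) unfolding filterlim_at_top by blast
    show "eventually (\<lambda>i. 1 \<le> mm i - K * ss i \<and> mm i + K * ss i + 1 \<le> real (q i) \<and>
        (\<forall>j::nat. \<bar>real j - mm i\<bar> \<le> K * ss i \<longrightarrow>
           \<bar>ln (w i (Suc j)) - ln (w i j) + (real j + 1/2 - mm i)/(ss i)^2\<bar> \<le> e / ss i)) sequentially"
      using ev
    proof eventually_elim
      case (elim i)
      define y where "y = sqrt (real (r i))"
      have "Y^2 \<le> real (r i)" using elim by linarith
      then have yY: "Y \<le> y" unfolding y_def using Y1 by (simp add: real_le_rsqrt)
      have y1: "1 \<le> y" using yY Y1 by simp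
      have yy: "real (r i) = y^2" unfolding y_def using rpos[of i] by simp
      have mmy: "mm i = mu' * y^2" unfolding mmr yy mu'_def ..
      have ssy: "ss i = sgm * y" unfolding ssr y_def ..
      have qy: "real (q i) = c * y^2" unfolding qr yy ..
      have cal: "c = mu' + al'" unfolding al'_def mu'_def al_def[OF c] by simp
      have Ym: "(K* sgm+1)/mu' \<le> y" "(K* sgm+1)/al' \<le> y" using yY unfolding Y_def by auto
      have W1: "K * sgm * y + 1 \<le> mu' * y^2"
      proof -
        have "K* sgm+1 \<le> mu' * y" using Ym(1) alp by (simp add: pos_divide_le_eq mult.commute)
        then have "(K* sgm+1) * y \<le> (mu' * y) * y" using y1 by (intro mult_right_mono) auto
        then show ?thesis using y1 sgmp K by (simp add: power2_eq_square algebra_simps)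
      qed
      have W2: "K * sgm * y + 1 \<le> al' * y^2"
      proof -
        have "K* sgm+1 \<le> al' * y" using Ym(2) alp by (simp add: pos_divide_le_eq mult.commute)
        then have "(K* sgm+1) * y \<le> (al' * y) * y" using y1 by (intro mult_right_mono) auto
        then show ?thesis using y1 sgmp K by (simp add: power2_eq_square algebra_simps)
      qed
      have win1: "1 \<le> mm i - K * ss i" unfolding mmy ssy using W1 by (simp add: algebra_simps)
      have win2: "mm i + K * ss i + 1 \<le> real (q i)" unfolding mmy ssy qy cal using W2
        by (simp add: algebra_simps)
      have locj: "\<bar>ln (w i (Suc j)) - ln (w i j) + (real j + 1/2 - mm i)/(ss i)^2\<bar> \<le> e / ss i"
        if j: "\<bar>real j - mm i\<bar> \<le> K * ss i" for j
      proof -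
        define u where "u = real j - mm i"
        have jq: "j < q i" using j win2 by (simp add: abs_le_iff)
        have D: "ln (w i (Suc j)) - ln (w i j) = ln (rho (r i) (q i) j)"
          unfolding w_def by (rule ln_diff[OF jq])
        have rhoe: "rho (r i) (q i) j = (al' * y^2 - u) * (be' * y^2 + u + 1) / (mu' * y^2 + u + 1)^2"
        proof -
          have a: "real (q i) - real j = al' * y^2 - u" unfolding qy u_def mmy cal by (simp add: algebra_simps)
          have b: "real (r i) + real j + 1 = be' * y^2 + u + 1"
            unfolding yy u_def mmy be'_def be_def[OF c] mu'_def by (simp add: algebra_simps)
          have d: "real j + 1 = mu' * y^2 + u + 1" unfolding u_def mmy by simp
          show ?thesis unfolding rho_def a b d ..
        qed
        have uK: "\<bar>u\<bar> \<le> K * sgm * y" using j unfolding u_def ssy by (simp add: mult.assoc)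
        have ident': "1/al' - 1/be' + 2/mu' = 1/sgm^2"
          unfolding al'_def be'_def mu'_def sgm2 by (rule ident[OF c])
        have albe': "al' * be' = mu'^2" unfolding al'_def be'_def mu'_def by (rule albe[OF c])
        have yb: "2 * (K* sgm/al') \<le> y" "2 * ((K* sgm+1)/be') \<le> y" "2 * ((K* sgm+1)/mu') \<le> y"
          "Cst * sgm / e \<le> y" using yY unfolding Y_def by auto
        have core: "\<bar>ln ((al'*y^2 - u) * (be'*y^2 + u + 1) / (mu'*y^2 + u + 1)^2) + (u + 1/2)/(sgm*y)^2\<bar>
            \<le> e/(sgm*y)"
          by (rule loc_core[OF alp sgmp K e y1 ident' albe' uK yb(1,2,3) yb(4)[unfolded Cst_def]])
        have eqj: "(real j + 1/2 - mm i) = u + 1/2" unfolding u_def by simp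
        show ?thesis unfolding D rhoe ssy eqj using core .
      qed
      show ?case using win1 win2 locj by blast
    qed
  qed
  show ?thesis
    unfolding weak_conv_m_def weak_conv_def
  proof (intro allI impI)
    fix x :: real
    have "(\<lambda>k. cdf (normalized_B c (r k)) x) =
      (\<lambda>i. (\<Sum>k\<in>{k. k \<le> q i \<and> (real k - mm i)/ss i \<le> x}. w i k) / (\<Sum>k\<in>{..q i}. w i k))"
      unfolding q_def w_def mm_def ss_def by (rule ext) (rule cdf_normalized)
    moreover have "cdf std_normal_distribution x = measure NN {..x}" by (simp add: cdf_def)
    ultimately show "(\<lambda>k. cdf (normalized_B c (r k)) x) \<longlonglongrightarrow> cdf std_normal_distribution x"
      using main[of x] by simp
  qed
qed


end
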